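(* Let $\mathbb{K}$ be any field and let $1\le k\le m$ be integers. Then $$\mathcal{S}(k)+\mathcal{S}(m)\supseteq\Big\{\alpha=\sum_{n}\alpha_n t^{-n}\in\mathbb{K}((t^{-1})) : \alpha_n=0 \text{ for every integer } 1\le n<\max\{k,\tfrac{m-1}{2}\}\Big\}.$$
   Context: $\mathbb{K}((t^{-1}))$ is the field of formal Laurent series $\alpha=\sum_{n=-\infty}^{\infty}\alpha_n t^{-n}$ over the field $\mathbb{K}$ (only finitely many nonzero $\alpha_n$ with $n<0$), with $\deg\alpha=\sup\{-n:\alpha_n\ne0\}$. Every $\alpha$ has a unique continued fraction expansion $[a_0;a_1,a_2,\dots]$ with $a_n\in\mathbb{K}[t]$, $\deg a_n\ge1$ for $n\ge1$, finite iff $\alpha\in\mathbb{K}(t)$. $a_n(\alpha)$ denotes the $n$-th partial quotient (when defined) and $d_n(\alpha)=\deg a_n(\alpha)$. For $k\ge1$, $\mathcal{S}(k)=\{\alpha\in\mathbb{K}((t^{-1})): d_n(\alpha)\ge k \text{ for every } n\ge1 \text{ for which } a_n(\alpha)\text{ is defined}\}$. *)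

theory Defs
  imports "HOL-Computational_Algebra.Formal_Laurent_Series"
begin

(* K((t^{-1})) is modelled as 'a fls with the series variable X = t^{-1}:
   alpha = sum_n alpha_n t^{-n}  corresponds to  fls_nth alpha n = alpha_n.
   Polynomials in t are the series with alpha_n = 0 for n > 0. *)

definition cf_frac :: "'a::field fls \<Rightarrow> 'a fls" where
  "cf_frac f = fps_to_fls (fls_regpart f) - fls_const (fls_nth f 0)"

(* integer (polynomial) part as a polynomial in t: coefficient of t^j is f_{-j} *)
definition cf_intpart :: "'a::field fls \<Rightarrow> 'a poly" where
  "cf_intpart f = fls_prpart f + [: fls_nth f 0 :]"

primrec cf_tail :: "'a::field fls \<Rightarrow> nat \<Rightarrow> 'a fls" where
  "cf_tail f 0 = f"
| "cf_tail f (Suc n) = inverse (cf_frac (cf_tail f n))"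

definition cf_defined :: "'a::field fls \<Rightarrow> nat \<Rightarrow> bool" where
  "cf_defined f n = (\<forall>j<n. cf_frac (cf_tail f j) \<noteq> 0)"

definition cf_pq :: "'a::field fls \<Rightarrow> nat \<Rightarrow> 'a poly" where
  "cf_pq f n = cf_intpart (cf_tail f n)"

definition cfS :: "nat \<Rightarrow> 'a::field fls set" where
  "cfS k = {f. \<forall>n\<ge>1. cf_defined f n \<longrightarrow> k \<le> degree (cf_pq f n)}"

end

theory Submission
  imports Defs
begin

definition ge :: "'a::field fls \<Rightarrow> int \<Rightarrow> bool" where
  "ge f r \<longleftrightarrow> (\<forall>j<r. fls_nth f j = 0)"

lemma ge_iff: "ge f r \<longleftrightarrow> f = 0 \<or> r \<le> fls_subdegree f"
  unfolding ge_def
  by (metis fls_subdegree_geI fls_subdegree_leI linorder_not_less fls_zero_nth order_less_le_trans)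

lemma ge_add: "ge f r \<Longrightarrow> ge g r \<Longrightarrow> ge (f + g) r"
  by (simp add: ge_def)
lemma ge_diff: "ge f r \<Longrightarrow> ge g r \<Longrightarrow> ge (f - g) r"
  by (simp add: ge_def)
lemma ge_mono: "ge f r \<Longrightarrow> s \<le> r \<Longrightarrow> ge f s"
  by (simp add: ge_def)
lemma ge_0[simp]: "ge 0 r"
  by (simp add: ge_def)

lemma cf_frac_nth: "fls_nth (cf_frac f) j = (if 1 \<le> j then fls_nth f j else 0)"
  by (simp add: cf_frac_def)

lemma cf_frac_zero[simp]: "cf_frac 0 = 0"
  by (intro fls_eqI) (simp add: cf_frac_nth)

lemma cf_frac_add: "cf_frac (f + g) = cf_frac f + cf_frac g"
  by (intro fls_eqI) (simp add: cf_frac_nth)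
lemma cf_frac_diff: "cf_frac (f - g) = cf_frac f - cf_frac g"
  by (intro fls_eqI) (simp add: cf_frac_nth)

lemma ge_frac: "ge (cf_frac f) 1"
  by (simp add: ge_def cf_frac_nth)

lemma cf_frac_id: "ge f 1 \<Longrightarrow> cf_frac f = f"
  by (intro fls_eqI) (auto simp add: cf_frac_nth ge_def)

definition ispol :: "'a::field fls \<Rightarrow> bool" where
  "ispol b \<longleftrightarrow> (\<forall>j>0. fls_nth b j = 0)"

lemma frac_pol_add: "ispol b \<Longrightarrow> ge x 1 \<Longrightarrow> cf_frac (b + x) = x"
  by (intro fls_eqI) (auto simp add: cf_frac_nth ge_def ispol_def)

lemma frac_pol: "ispol b \<Longrightarrow> cf_frac b = 0"
  using frac_pol_add[of b 0] by simp

lemma sd_pol_add: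
  assumes "ispol b" "b \<noteq> 0" "fls_subdegree b \<le> -1" "ge x 1"
  shows "b + x \<noteq> 0 \<and> fls_subdegree (b + x) = fls_subdegree b"
proof (cases "x = 0")
  case True thus ?thesis using assms by simp
next
  case False
  hence "fls_subdegree x \<ge> 1" using assms ge_iff by blast
  hence "fls_subdegree (b + x) = fls_subdegree b"
    using assms by (intro fls_subdegree_add_eq1) auto
  moreover have "b + x \<noteq> 0"
  proof
    assume "b + x = 0"
    hence "x = - b" by (simp add: add_eq_0_iff)
    hence "fls_subdegree x = fls_subdegree b" by simp
    thus False using \<open>fls_subdegree x \<ge> 1\<close> assms by simp
  qed
  ultimately show ?thesis by simp
qed

lemma sd_inv_diff:
  fixes e c :: "'a::field fls"
  assumes "e \<noteq> 0" "c \<noteq> 0" "e \<noteq> c"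
  shows "inverse e - inverse c \<noteq> 0 \<and>
    fls_subdegree (inverse e - inverse c) = fls_subdegree (e - c) - fls_subdegree e - fls_subdegree c"
proof -
  have eq: "inverse e - inverse c = (c - e) * (inverse e * inverse c)"
    using assms by (simp add: field_simps)
  have "c - e \<noteq> 0" using assms by simp
  moreover have "inverse e * inverse c \<noteq> 0" using assms by simp
  ultimately show ?thesis
    unfolding eq using assms
    by (simp add: fls_subdegree_minus_sym)
qed

definition vb :: "int \<Rightarrow> 'a::field fls \<Rightarrow> bool" where
  "vb k b \<longleftrightarrow> ispol b \<and> b \<noteq> 0 \<and> fls_subdegree b \<le> -k"

lemma Rev:
  assumes "vb 1 b" "ge x 1" "ge y 1" "x \<noteq> y"
  shows "inverse (b + x) - inverse (b + y) \<noteq> 0 \<and>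
    fls_subdegree (inverse (b + x) - inverse (b + y)) = fls_subdegree (x - y) - 2 * fls_subdegree b"
proof -
  have 1: "b + x \<noteq> 0 \<and> fls_subdegree (b + x) = fls_subdegree b"
    using assms sd_pol_add unfolding vb_def by auto
  have 2: "b + y \<noteq> 0 \<and> fls_subdegree (b + y) = fls_subdegree b"
    using assms sd_pol_add unfolding vb_def by auto
  have 3: "inverse (b + x) \<noteq> 0" "inverse (b + y) \<noteq> 0" using 1 2 by auto
  have 4: "inverse (b + x) \<noteq> inverse (b + y)" using assms by simp
  have "inverse (b + x) - inverse (b + y) \<noteq> 0 \<and> fls_subdegree (inverse (b + x) - inverse (b + y)) =
     fls_subdegree (b + x - (b + y)) - fls_subdegree (b + x) - fls_subdegree (b + y)"
    using sd_inv_diff[of "inverse (b + x)" "inverse (b + y)"] 3 4 by simp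
  thus ?thesis using 1 2 by simp
qed

lemma Exp:
  assumes "vb 1 b" "ge x 1" "e \<noteq> inverse (b + x)"
    and "fls_subdegree (e - inverse (b + x)) > - 2 * fls_subdegree b"
  shows "e \<noteq> 0 \<and> fls_subdegree e = - fls_subdegree b \<and>
     inverse e = b + cf_frac (inverse e) \<and> cf_frac (inverse e) \<noteq> x \<and>
     fls_subdegree (cf_frac (inverse e) - x) = fls_subdegree (e - inverse (b + x)) + 2 * fls_subdegree b"
proof -
  define c where "c = inverse (b + x)"
  have 1: "b + x \<noteq> 0 \<and> fls_subdegree (b + x) = fls_subdegree b"
    using assms sd_pol_add unfolding vb_def by auto
  have c0: "c \<noteq> 0" and sdc: "fls_subdegree c = - fls_subdegree b"
    using 1 by (auto simp: c_def)
  have sb: "fls_subdegree b \<le> -1" using assms unfolding vb_def by auto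
  have ec: "e - c \<noteq> 0" using assms by (simp add: c_def)
  have lt: "fls_subdegree c < fls_subdegree (e - c)" using assms sdc sb by (simp add: c_def)
  have sde: "fls_subdegree (c + (e - c)) = fls_subdegree c"
    using fls_subdegree_add_eq1[OF c0 lt] .
  have e0: "e \<noteq> 0"
  proof
    assume "e = 0"
    hence "e - c = - c" by simp
    hence "fls_subdegree (e - c) = fls_subdegree c" by simp
    thus False using lt by simp
  qed
  have sde2: "fls_subdegree e = - fls_subdegree b" using sde sdc by simp
  have D: "inverse e - inverse c \<noteq> 0 \<and>
    fls_subdegree (inverse e - inverse c) = fls_subdegree (e - c) - fls_subdegree e - fls_subdegree c"
    using sd_inv_diff[OF e0 c0] assms by (simp add: c_def)
  define \<Delta> where "\<Delta> = inverse e - inverse c"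
  have sdD: "fls_subdegree \<Delta> = fls_subdegree (e - c) + 2 * fls_subdegree b"
    using D sde2 sdc by (simp add: \<Delta>_def)
  have gD: "ge \<Delta> 1" using sdD assms(4) ge_iff unfolding c_def by fastforce
  have ie: "inverse e = b + (x + \<Delta>)" using 1 by (simp add: \<Delta>_def c_def)
  have gx: "ge (x + \<Delta>) 1" using gD assms(2) ge_add by blast
  have pol: "ispol b" using assms unfolding vb_def by auto
  have fr: "cf_frac (inverse e) = x + \<Delta>" unfolding ie using frac_pol_add[OF pol gx] .
  have "cf_frac (inverse e) - x = \<Delta>" using fr by simp
  moreover have "\<Delta> \<noteq> 0" using D by (simp add: \<Delta>_def)
  ultimately show ?thesis using e0 sde2 ie fr sdD by (auto simp: c_def)
qed

definition T :: "'a::field fls \<Rightarrow> 'a fls" where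
  "T u = cf_frac (inverse u)"

primrec ev :: "'a::field fls list \<Rightarrow> 'a fls" where
  "ev [] = 0"
| "ev (b # bs) = inverse (b + ev bs)"

definition Dsum :: "'a::field fls list \<Rightarrow> int" where
  "Dsum as = sum_list (map (\<lambda>b. - fls_subdegree b) as)"

definition valid :: "int \<Rightarrow> 'a::field fls list \<Rightarrow> bool" where
  "valid k as \<longleftrightarrow> (\<forall>b\<in>set as. vb k b)"

primrec pql :: "'a::field fls \<Rightarrow> nat \<Rightarrow> 'a fls list" where
  "pql e 0 = []"
| "pql e (Suc N) = (inverse e - cf_frac (inverse e)) # pql (T e) N"

lemma Dsum_Nil[simp]: "Dsum [] = 0" by (simp add: Dsum_def)
lemma Dsum_Cons[simp]: "Dsum (b # bs) = - fls_subdegree b + Dsum bs" by (simp add: Dsum_def)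
lemma Dsum_app[simp]: "Dsum (as @ bs) = Dsum as + Dsum bs" by (simp add: Dsum_def)
lemma valid_Nil[simp]: "valid k []" by (simp add: valid_def)
lemma valid_Cons[simp]: "valid k (b # bs) \<longleftrightarrow> vb k b \<and> valid k bs" by (simp add: valid_def)
lemma valid_app[simp]: "valid k (as @ bs) \<longleftrightarrow> valid k as \<and> valid k bs" by (auto simp add: valid_def)

lemma vb_mono: "vb k b \<Longrightarrow> l \<le> k \<Longrightarrow> vb l b" by (auto simp: vb_def)
lemma valid_mono: "valid k as \<Longrightarrow> l \<le> k \<Longrightarrow> valid l as"
  by (auto simp: valid_def intro: vb_mono)

lemma Dsum_ge: "valid k as \<Longrightarrow> 0 \<le> k \<Longrightarrow> k * int (length as) \<le> Dsum as"
  by (induction as) (auto simp: vb_def algebra_simps)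

lemma ev_props: "valid 1 as \<Longrightarrow> ge (ev as) 1"
proof (induction as)
  case Nil thus ?case by simp
next
  case (Cons b bs)
  hence "vb 1 b" "ge (ev bs) 1" by auto
  hence "b + ev bs \<noteq> 0 \<and> fls_subdegree (b + ev bs) = fls_subdegree b"
    using sd_pol_add unfolding vb_def by blast
  thus ?case using \<open>vb 1 b\<close> by (auto simp: ge_iff vb_def)
qed

lemma ev_Cons_props:
  assumes "valid 1 (b # bs)"
  shows "ev (b # bs) \<noteq> 0 \<and> fls_subdegree (ev (b # bs)) = - fls_subdegree b \<and> T (ev (b # bs)) = ev bs"
proof -
  have "vb 1 b" "ge (ev bs) 1" using assms ev_props by auto
  hence "b + ev bs \<noteq> 0 \<and> fls_subdegree (b + ev bs) = fls_subdegree b"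
    using sd_pol_add unfolding vb_def by blast
  moreover have "cf_frac (b + ev bs) = ev bs"
    using frac_pol_add \<open>vb 1 b\<close> \<open>ge (ev bs) 1\<close> unfolding vb_def by blast
  ultimately show ?thesis by (simp add: T_def)
qed

lemma T0[simp]: "T 0 = 0"
  by (intro fls_eqI) (simp add: T_def cf_frac_nth)

lemma T_term: "valid 1 as \<Longrightarrow> (T ^^ length as) (ev as) = 0"
proof (induction as)
  case Nil thus ?case by simp
next
  case (Cons b bs)
  thus ?case using ev_Cons_props[OF Cons.prems] by (simp add: funpow_Suc_right del: funpow.simps)
qed

lemma T_term2: "valid 1 as \<Longrightarrow> length as \<le> j \<Longrightarrow> (T ^^ j) (ev as) = 0"
proof (induction j)
  case 0 thus ?case using T_term by fastforce
next
  case (Suc j)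
  show ?case
  proof (cases "length as = Suc j")
    case True thus ?thesis using T_term Suc by metis
  next
    case False thus ?thesis using Suc by simp
  qed
qed

lemma Refine:
  assumes "valid 1 as" "e \<noteq> ev as" "fls_subdegree (e - ev as) > 2 * Dsum as"
  shows "\<exists>a. pql e (Suc (length as)) = as @ [a] \<and> vb 1 a \<and>
     - fls_subdegree a = fls_subdegree (e - ev as) - 2 * Dsum as \<and>
     (e = ev (as @ [a]) \<or> (e \<noteq> ev (as @ [a]) \<and> fls_subdegree (e - ev (as @ [a])) > 2 * Dsum (as @ [a])))"
  using assms
proof (induction as arbitrary: e)
  case Nil
  hence e0: "e \<noteq> 0" and se: "fls_subdegree e > 0" by auto
  define a where "a = inverse e - cf_frac (inverse e)"
  have ie: "inverse e = a + T e" by (simp add: a_def T_def)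
  have pa: "ispol a" by (simp add: a_def ispol_def cf_frac_nth)
  have sie: "fls_subdegree (inverse e) < 0" using se by simp
  have ie0: "inverse e \<noteq> 0" using e0 by simp
  have nz: "fls_nth a (fls_subdegree (inverse e)) \<noteq> 0"
    using nth_fls_subdegree_nonzero[OF ie0] sie by (simp add: a_def cf_frac_nth)
  have sa: "fls_subdegree a = fls_subdegree (inverse e)"
    by (rule fls_subdegree_eqI[OF nz]) (simp add: a_def cf_frac_nth)
  have a0: "a \<noteq> 0" using nz by auto
  have vba: "vb 1 a" using pa a0 sa sie by (simp add: vb_def)
  have e_eq: "e = inverse (a + T e)" using ie by (metis inverse_inverse_eq)
  have gT: "ge (T e) 1" by (simp add: T_def ge_frac)
  have "e = ev [a] \<or> (e \<noteq> ev [a] \<and> fls_subdegree (e - ev [a]) > 2 * Dsum [a])"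
  proof (cases "T e = 0")
    case True thus ?thesis using e_eq by simp
  next
    case False
    have R: "inverse (a + T e) - inverse (a + 0) \<noteq> 0 \<and>
      fls_subdegree (inverse (a + T e) - inverse (a + 0)) = fls_subdegree (T e - 0) - 2 * fls_subdegree a"
      using Rev[OF vba gT _ False] by simp
    have "fls_subdegree (T e) \<ge> 1" using gT False ge_iff by blast
    thus ?thesis using R e_eq by simp
  qed
  moreover have "pql e (Suc (length [])) = [] @ [a]" by (simp add: a_def)
  ultimately show ?case using vba sa by auto
next
  case (Cons b bs)
  have vb: "vb 1 b" and vbs: "valid 1 bs" using Cons.prems by auto
  have gbs: "ge (ev bs) 1" using vbs ev_props by blast
  have Dbs: "Dsum bs \<ge> 0" using Dsum_ge[OF vbs] by simp
  have sb: "fls_subdegree b \<le> -1" using vb by (simp add: vb_def)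
  have hyp: "fls_subdegree (e - inverse (b + ev bs)) > - 2 * fls_subdegree b"
    using Cons.prems Dbs by simp
  have X: "e \<noteq> 0 \<and> fls_subdegree e = - fls_subdegree b \<and>
     inverse e = b + cf_frac (inverse e) \<and> cf_frac (inverse e) \<noteq> ev bs \<and>
     fls_subdegree (cf_frac (inverse e) - ev bs) = fls_subdegree (e - inverse (b + ev bs)) + 2 * fls_subdegree b"
    using Exp[OF vb gbs _ hyp] Cons.prems by simp
  have Te: "T e = cf_frac (inverse e)" by (simp add: T_def)
  have IHp: "fls_subdegree (T e - ev bs) > 2 * Dsum bs" using X Te Cons.prems by simp
  obtain a where a: "pql (T e) (Suc (length bs)) = bs @ [a]" "vb 1 a"
     "- fls_subdegree a = fls_subdegree (T e - ev bs) - 2 * Dsum bs"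
     "T e = ev (bs @ [a]) \<or> (T e \<noteq> ev (bs @ [a]) \<and> fls_subdegree (T e - ev (bs @ [a])) > 2 * Dsum (bs @ [a]))"
    using Cons.IH[OF vbs _ IHp] X Te by auto
  have ie: "inverse e = b + T e" using X Te by simp
  have e_eq: "e = inverse (b + T e)" using ie by (metis inverse_inverse_eq)
  have h: "inverse e - cf_frac (inverse e) = b"
  proof -
    have "inverse e - cf_frac (inverse e) = inverse e - T e" by (simp add: T_def)
    also have "\<dots> = b" using ie by simp
    finally show ?thesis .
  qed
  have "pql e (Suc (length (b # bs))) = (inverse e - cf_frac (inverse e)) # pql (T e) (Suc (length bs))"
    by simp
  hence pq: "pql e (Suc (length (b # bs))) = (b # bs) @ [a]"
    using a(1) h by simp
  have gT: "ge (T e) 1" by (simp add: T_def ge_frac)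
  have gba: "ge (ev (bs @ [a])) 1" using vbs a(2) by (intro ev_props) simp
  have fin: "e = ev ((b # bs) @ [a]) \<or> (e \<noteq> ev ((b # bs) @ [a]) \<and>
       fls_subdegree (e - ev ((b # bs) @ [a])) > 2 * Dsum ((b # bs) @ [a]))"
  proof (cases "T e = ev (bs @ [a])")
    case True thus ?thesis using e_eq by simp
  next
    case False
    have R: "inverse (b + T e) - inverse (b + ev (bs @ [a])) \<noteq> 0 \<and>
      fls_subdegree (inverse (b + T e) - inverse (b + ev (bs @ [a]))) = fls_subdegree (T e - ev (bs @ [a])) - 2 * fls_subdegree b"
      using Rev[OF vb gT gba False] .
    thus ?thesis using a(4) False e_eq by (simp add: algebra_simps)
  qed
  show ?case using pq a(2,3) fin X Te by (intro exI[of _ a]) (simp add: algebra_simps)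
qed

lemma Cyl:
  assumes "valid k as" "1 \<le> k" "e = ev as \<or> (e \<noteq> ev as \<and> fls_subdegree (e - ev as) \<ge> 2 * Dsum as + k)"
    "j \<le> length as"
  shows "(T ^^ j) e = 0 \<or> fls_subdegree ((T ^^ j) e) \<ge> k"
  using assms
proof (induction as arbitrary: e j)
  case Nil thus ?case by auto
next
  case (Cons b bs)
  have vb: "vb 1 b" and vbs: "valid k bs" and vbk: "vb k b" using Cons.prems vb_mono by auto
  have vbs1: "valid 1 bs" using vbs valid_mono Cons.prems by blast
  have gbs: "ge (ev bs) 1" using vbs1 ev_props by blast
  have Dbs: "Dsum bs \<ge> 0" using Dsum_ge[OF vbs1] by simp
  have sb: "fls_subdegree b \<le> -k" using vbk by (simp add: vb_def)
  have EC: "ev (b # bs) \<noteq> 0 \<and> fls_subdegree (ev (b # bs)) = - fls_subdegree b \<and> T (ev (b # bs)) = ev bs"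
    using ev_Cons_props vb vbs1 by auto
  show ?case
  proof (cases "e = ev (b # bs)")
    case True
    show ?thesis
    proof (cases j)
      case 0 thus ?thesis using True EC sb by simp
    next
      case (Suc j')
      have "(T ^^ j') (T e) = 0 \<or> k \<le> fls_subdegree ((T ^^ j') (T e))"
        using Cons.IH[OF vbs Cons.prems(2), of "T e" j'] True EC Suc Cons.prems(4) by simp
      thus ?thesis using Suc by (simp add: funpow_Suc_right del: funpow.simps)
    qed
  next
    case False
    have hyp: "fls_subdegree (e - inverse (b + ev bs)) > - 2 * fls_subdegree b"
      using Cons.prems False Dbs sb by simp
    have X: "e \<noteq> 0 \<and> fls_subdegree e = - fls_subdegree b \<and>
       inverse e = b + cf_frac (inverse e) \<and> cf_frac (inverse e) \<noteq> ev bs \<and>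
       fls_subdegree (cf_frac (inverse e) - ev bs) = fls_subdegree (e - inverse (b + ev bs)) + 2 * fls_subdegree b"
      using Exp[OF vb gbs _ hyp] False by simp
    show ?thesis
    proof (cases j)
      case 0 thus ?thesis using X sb by simp
    next
      case (Suc j')
      have Te: "T e = cf_frac (inverse e)" by (simp add: T_def)
      have "fls_subdegree (T e - ev bs) \<ge> 2 * Dsum bs + k"
        using X Cons.prems False Te by simp
      moreover have "T e \<noteq> ev bs" using X Te by simp
      ultimately have "(T ^^ j') (T e) = 0 \<or> k \<le> fls_subdegree ((T ^^ j') (T e))"
        using Cons.IH[OF vbs Cons.prems(2), of "T e" j'] Suc Cons.prems(4) by simp
      thus ?thesis using Suc by (simp add: funpow_Suc_right del: funpow.simps)
    qed
  qed
qed

lemma coeff_intpart: "coeff (cf_intpart f) i = fls_nth f (- int i)"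
  by (cases i) (simp_all add: cf_intpart_def)

lemma deg_intpart:
  assumes "f \<noteq> 0" "fls_subdegree f \<le> 0"
  shows "degree (cf_intpart f) = nat (- fls_subdegree f)"
proof (rule antisym)
  show "degree (cf_intpart f) \<le> nat (- fls_subdegree f)"
    by (rule degree_le) (auto simp: coeff_intpart)
  show "nat (- fls_subdegree f) \<le> degree (cf_intpart f)"
    by (rule le_degree) (use assms in \<open>simp add: coeff_intpart\<close>)
qed

lemma frac_tail: "cf_frac (cf_tail f n) = (T ^^ n) (cf_frac f)"
  by (induction n) (simp_all add: T_def)

lemma cfS_intro:
  assumes "1 \<le> k" "\<forall>j. (T ^^ j) (cf_frac f) = 0 \<or> int k \<le> fls_subdegree ((T ^^ j) (cf_frac f))"
  shows "f \<in> cfS k"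
  unfolding cfS_def
proof (intro CollectI allI impI)
  fix n :: nat assume n1: "1 \<le> n" and d: "cf_defined f n"
  then obtain n' where n': "n = Suc n'" by (cases n) auto
  define u where "u = (T ^^ n') (cf_frac f)"
  have u0: "u \<noteq> 0" using d n' frac_tail[of f n'] unfolding cf_defined_def u_def by (metis lessI)
  have su: "int k \<le> fls_subdegree u" using assms(2) u0 by (auto simp: u_def)
  have "cf_pq f n = cf_intpart (inverse u)"
    by (simp add: cf_pq_def n' u_def frac_tail)
  moreover have "degree (cf_intpart (inverse u)) = nat (fls_subdegree u)"
    using deg_intpart[of "inverse u"] u0 su assms(1) by simp
  ultimately show "k \<le> degree (cf_pq f n)" using su by simp
qed

lemma ge_chain:
  assumes "mono r" "\<forall>n. ge (c (Suc n) - c n) (r n)" "n \<le> n'"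
  shows "ge (c n' - c n) (r n)"
  using assms(3)
proof (induction n' rule: dec_induct)
  case base thus ?case by simp
next
  case (step n')
  have "ge (c (Suc n') - c n') (r n)"
    using assms(2) ge_mono monoD[OF assms(1) step(1)] by blast
  hence "ge ((c (Suc n') - c n') + (c n' - c n)) (r n)" using step ge_add by blast
  thus ?case by simp
qed

lemma limit:
  fixes c :: "nat \<Rightarrow> 'a::field fls"
  assumes "\<forall>n. ge (c n) 1" "mono r" "\<forall>n. ge (c (Suc n) - c n) (r n)" "\<forall>j. \<exists>n. j < r n"
  shows "\<exists>L. ge L 1 \<and> (\<forall>n. ge (L - c n) (r n))"
proof -
  define N where "N j = (SOME n. j < r n)" for j
  have N: "j < r (N j)" for j using someI_ex[OF assms(4)[rule_format, of j]] by (simp add: N_def)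
  define L where "L = fps_to_fls (Abs_fps (\<lambda>i. fls_nth (c (N (int i))) (int i)))"
  have Lnth: "fls_nth L j = (if j < 0 then 0 else fls_nth (c (N j)) j)" for j
    by (simp add: L_def)
  have eq: "fls_nth (c (N j)) j = fls_nth (c n) j" if "j < r n" for j n
  proof (cases "N j \<le> n")
    case True
    have "ge (c n - c (N j)) (r (N j))" using ge_chain[OF assms(2,3) True] .
    thus ?thesis using N[of j] by (simp add: ge_def)
  next
    case False
    have "ge (c (N j) - c n) (r n)" using ge_chain[OF assms(2,3)] False by simp
    thus ?thesis using that by (simp add: ge_def)
  qed
  have "ge L 1" using assms(1) by (simp add: ge_def Lnth)
  moreover have "ge (L - c n) (r n)" for n
    unfolding ge_def
  proof (intro allI impI)
    fix j assume j: "j < r n"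
    show "fls_nth (L - c n) j = 0"
    proof (cases "j < 0")
      case True thus ?thesis using assms(1) by (simp add: Lnth ge_def)
    next
      case False thus ?thesis using eq[OF j] by (simp add: Lnth)
    qed
  qed
  ultimately show ?thesis by blast
qed

lemma half:
  assumes "valid k1 as1" "1 \<le> k1" "e \<noteq> ev as1"
    and "2 * Dsum as1 + k1 \<le> R2" "2 * Dsum as1 + k1 \<le> fls_subdegree (e - ev as1)"
    and "(2 * Dsum as1 + k1) + R2 - 2 * fls_subdegree (e - ev as1) \<le> k1 + 1"
  shows "\<exists>x. pql e (Suc (length as1)) = as1 @ [x] \<and> vb k1 x \<and>
     (e - ev (as1 @ [x]) = 0 \<or>
       (min (2 * Dsum (as1 @ [x]) + k1) R2 \<le> fls_subdegree (e - ev (as1 @ [x])) \<and>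
        (2 * Dsum (as1 @ [x]) + k1) + R2 - 2 * fls_subdegree (e - ev (as1 @ [x])) \<le>
        (2 * Dsum as1 + k1) + R2 - 2 * fls_subdegree (e - ev as1) - 2)) \<and>
     ge (e - ev (as1 @ [x])) (2 * Dsum as1 + k1) \<and>
     2 * Dsum (as1 @ [x]) + k1 \<ge> 2 * Dsum as1 + k1 + 2"
proof -
  have v1: "valid 1 as1" using assms valid_mono by blast
  have "fls_subdegree (e - ev as1) > 2 * Dsum as1" using assms by simp
  then obtain x where x: "pql e (Suc (length as1)) = as1 @ [x]" "vb 1 x"
     "- fls_subdegree x = fls_subdegree (e - ev as1) - 2 * Dsum as1"
     "e = ev (as1 @ [x]) \<or> (e \<noteq> ev (as1 @ [x]) \<and> fls_subdegree (e - ev (as1 @ [x])) > 2 * Dsum (as1 @ [x]))"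
    using Refine[OF v1 assms(3)] by blast
  have vx: "vb k1 x" using x(2,3) assms(5) by (simp add: vb_def)
  have D: "Dsum (as1 @ [x]) = fls_subdegree (e - ev as1) - Dsum as1" using x(3) by simp
  show ?thesis
  proof (cases "e = ev (as1 @ [x])")
    case True
    have sx: "- fls_subdegree x \<ge> k1" using vx by (simp add: vb_def)
    show ?thesis using x(1) vx D sx assms(2) True by (simp add: ge_def)
  next
    case False
    hence d': "fls_subdegree (e - ev (as1 @ [x])) > 2 * Dsum (as1 @ [x])" using x(4) by simp
    have "ge (e - ev (as1 @ [x])) (2 * Dsum as1 + k1)"
      using d' D assms ge_iff by fastforce
    moreover have sx: "- fls_subdegree x \<ge> k1" using vx by (simp add: vb_def)
    ultimately show ?thesis using x(1) vx D d' assms by auto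
  qed
qed

definition R1 :: "int \<Rightarrow> 'a::field fls list \<times> 'a fls list \<Rightarrow> int" where
  "R1 k st = 2 * Dsum (fst st) + k"
definition R2 :: "int \<Rightarrow> 'a::field fls list \<times> 'a fls list \<Rightarrow> int" where
  "R2 m st = 2 * Dsum (snd st) + m"
definition EE :: "'a::field fls \<Rightarrow> 'a fls list \<times> 'a fls list \<Rightarrow> 'a fls" where
  "EE a st = a - ev (fst st) - ev (snd st)"

definition stp :: "int \<Rightarrow> int \<Rightarrow> 'a::field fls \<Rightarrow> 'a fls list \<times> 'a fls list \<Rightarrow> 'a fls list \<times> 'a fls list" where
  "stp k m a st = (if EE a st = 0 then st
     else if R1 k st \<le> R2 m st then (pql (a - ev (snd st)) (Suc (length (fst st))), snd st)
     else (fst st, pql (a - ev (fst st)) (Suc (length (snd st)))))"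

definition Inv :: "int \<Rightarrow> int \<Rightarrow> 'a::field fls \<Rightarrow> 'a fls list \<times> 'a fls list \<Rightarrow> bool" where
  "Inv k m a st \<longleftrightarrow> valid k (fst st) \<and> valid m (snd st) \<and>
     (EE a st = 0 \<or> (min (R1 k st) (R2 m st) \<le> fls_subdegree (EE a st) \<and>
        R1 k st + R2 m st - 2 * fls_subdegree (EE a st) \<le> k + 1))"

lemma step:
  assumes "1 \<le> k" "k \<le> m" "Inv k m a st" "EE a st \<noteq> 0"
  shows "Inv k m a (stp k m a st) \<and>
    ge (ev (fst (stp k m a st)) - ev (fst st)) (R1 k st) \<and>
    ge (ev (snd (stp k m a st)) - ev (snd st)) (R2 m st) \<and>
    R1 k st \<le> R1 k (stp k m a st) \<and> R2 m st \<le> R2 m (stp k m a st) \<and>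
    length (fst st) \<le> length (fst (stp k m a st)) \<and>
    length (snd st) \<le> length (snd (stp k m a st)) \<and>
    (R1 k st \<le> R2 m st \<longrightarrow> R1 k (stp k m a st) \<ge> R1 k st + 2 \<and>
        length (fst (stp k m a st)) = Suc (length (fst st)) \<and> snd (stp k m a st) = snd st) \<and>
    (R2 m st < R1 k st \<longrightarrow> R2 m (stp k m a st) \<ge> R2 m st + 2 \<and>
        length (snd (stp k m a st)) = Suc (length (snd st)) \<and> fst (stp k m a st) = fst st)"
proof -
  obtain as1 as2 where st: "st = (as1, as2)" by fastforce
  have v1: "valid k as1" and v2: "valid m as2" using assms(3) by (auto simp: Inv_def st)
  define E where "E = a - ev as1 - ev as2"
  have E0: "E \<noteq> 0" using assms(4) by (simp add: EE_def st E_def)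
  have I: "min (2 * Dsum as1 + k) (2 * Dsum as2 + m) \<le> fls_subdegree E"
     "(2 * Dsum as1 + k) + (2 * Dsum as2 + m) - 2 * fls_subdegree E \<le> k + 1"
    using assms(3) E0 by (auto simp: Inv_def st EE_def R1_def R2_def E_def)
  show ?thesis
  proof (cases "2 * Dsum as1 + k \<le> 2 * Dsum as2 + m")
    case True
    have eE: "a - ev as2 - ev as1 = E" by (simp add: E_def)
    have ne: "a - ev as2 \<noteq> ev as1" using E0 eE by auto
    obtain x where x: "pql (a - ev as2) (Suc (length as1)) = as1 @ [x]" "vb k x"
      "(a - ev as2 - ev (as1 @ [x]) = 0 \<or>
       (min (2 * Dsum (as1 @ [x]) + k) (2 * Dsum as2 + m) \<le> fls_subdegree (a - ev as2 - ev (as1 @ [x])) \<and>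
        (2 * Dsum (as1 @ [x]) + k) + (2 * Dsum as2 + m) - 2 * fls_subdegree (a - ev as2 - ev (as1 @ [x])) \<le>
        (2 * Dsum as1 + k) + (2 * Dsum as2 + m) - 2 * fls_subdegree (a - ev as2 - ev as1) - 2))"
      "ge (a - ev as2 - ev (as1 @ [x])) (2 * Dsum as1 + k)"
      "2 * Dsum (as1 @ [x]) + k \<ge> 2 * Dsum as1 + k + 2"
      using half[OF v1 assms(1) ne True] I True eE by auto
    have stp: "stp k m a st = (as1 @ [x], as2)"
      using E0 True x(1) by (simp add: stp_def st EE_def R1_def R2_def E_def)
    have gE: "ge E (2 * Dsum as1 + k)" using I(1) True ge_iff by fastforce
    have "ev (as1 @ [x]) - ev as1 = E - (a - ev as2 - ev (as1 @ [x]))" by (simp add: E_def)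
    hence g1: "ge (ev (as1 @ [x]) - ev as1) (2 * Dsum as1 + k)" using gE x(4) ge_diff by metis
    have inv: "Inv k m a (as1 @ [x], as2)"
      using v1 v2 x(2,3) I eE unfolding Inv_def EE_def R1_def R2_def by (auto simp: algebra_simps)
    show ?thesis using stp inv g1 x(5) True by (simp add: st R1_def R2_def)
  next
    case False
    have eE: "a - ev as1 - ev as2 = E" by (simp add: E_def)
    have ne: "a - ev as1 \<noteq> ev as2" using E0 eE by auto
    have F: "2 * Dsum as2 + m \<le> 2 * Dsum as1 + k" using False by simp
    have m1: "1 \<le> m" using assms by simp
    obtain x where x: "pql (a - ev as1) (Suc (length as2)) = as2 @ [x]" "vb m x"
      "(a - ev as1 - ev (as2 @ [x]) = 0 \<or>
       (min (2 * Dsum (as2 @ [x]) + m) (2 * Dsum as1 + k) \<le> fls_subdegree (a - ev as1 - ev (as2 @ [x])) \<and>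
        (2 * Dsum (as2 @ [x]) + m) + (2 * Dsum as1 + k) - 2 * fls_subdegree (a - ev as1 - ev (as2 @ [x])) \<le>
        (2 * Dsum as2 + m) + (2 * Dsum as1 + k) - 2 * fls_subdegree (a - ev as1 - ev as2) - 2))"
      "ge (a - ev as1 - ev (as2 @ [x])) (2 * Dsum as2 + m)"
      "2 * Dsum (as2 @ [x]) + m \<ge> 2 * Dsum as2 + m + 2"
      using half[OF v2 m1 ne F] I F eE assms(2) by auto
    have stp: "stp k m a st = (as1, as2 @ [x])"
      using E0 False x(1) by (simp add: stp_def st EE_def R1_def R2_def E_def)
    have gE: "ge E (2 * Dsum as2 + m)" using I(1) F ge_iff by fastforce
    have "ev (as2 @ [x]) - ev as2 = E - (a - ev as1 - ev (as2 @ [x]))" by (simp add: E_def)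
    hence g2: "ge (ev (as2 @ [x]) - ev as2) (2 * Dsum as2 + m)" using gE x(4) ge_diff by metis
    have inv: "Inv k m a (as1, as2 @ [x])"
      using v1 v2 x(2,3) I eE unfolding Inv_def EE_def R1_def R2_def by (auto simp: algebra_simps)
    show ?thesis using stp inv g2 x(5) False by (simp add: st R1_def R2_def)
  qed
qed

lemma member:
  assumes "1 \<le> k" "ge u 1" "cf_frac P = 0"
    "\<forall>j. (T ^^ j) u = 0 \<or> int k \<le> fls_subdegree ((T ^^ j) u)"
  shows "u + P \<in> cfS k"
proof -
  have "cf_frac (u + P) = u" using assms cf_frac_id by (simp add: cf_frac_add)
  thus ?thesis using cfS_intro[OF assms(1), of "u + P"] assms(4) by simp
qed

lemma ev_all:
  assumes "valid (int k) as" "1 \<le> k"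
  shows "\<forall>j. (T ^^ j) (ev as) = 0 \<or> int k \<le> fls_subdegree ((T ^^ j) (ev as))"
proof
  fix j
  have v1: "valid 1 as" using assms valid_mono by force
  show "(T ^^ j) (ev as) = 0 \<or> int k \<le> fls_subdegree ((T ^^ j) (ev as))"
  proof (cases "j \<le> length as")
    case True thus ?thesis using Cyl[OF assms(1), of "ev as" j] assms(2) by simp
  next
    case False thus ?thesis using T_term2[OF v1] by simp
  qed
qed

theorem theorem1p2:
  fixes k m :: nat and \<alpha> :: "'a::field fls"
  assumes "1 \<le> k" and "k \<le> m"
    and "\<forall>n::int. 1 \<le> n \<and> real_of_int n < max (real k) ((real m - 1) / 2) \<longrightarrow> fls_nth \<alpha> n = 0"
  shows "\<exists>\<beta> \<gamma>. \<beta> \<in> cfS k \<and> \<gamma> \<in> cfS m \<and> \<alpha> = \<beta> + \<gamma>"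
proof -
  define K where "K = int k"
  define M where "M = int m"
  have K1: "1 \<le> K" and KM: "K \<le> M" using assms by (auto simp: K_def M_def)
  define a where "a = cf_frac \<alpha>"
  have ga: "ge a 1" by (simp add: a_def ge_frac)
  have Pa: "cf_frac (\<alpha> - a) = 0"
    by (simp add: a_def cf_frac_diff cf_frac_id[OF ge_frac])
  have hyp: "K \<le> fls_subdegree a \<and> M - 1 \<le> 2 * fls_subdegree a" if "a \<noteq> 0"
  proof -
    define s where "s = fls_subdegree a"
    have ns: "fls_nth a s \<noteq> 0" using that by (simp add: s_def)
    hence s1: "1 \<le> s" and ns2: "fls_nth \<alpha> s \<noteq> 0"
      by (auto simp: a_def cf_frac_nth split: if_splits)
    hence "\<not> real_of_int s < max (real k) ((real m - 1) / 2)" using assms(3) by blast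
    hence "real k \<le> real_of_int s" "(real m - 1) / 2 \<le> real_of_int s" by (simp_all add: not_less)
    hence "real k \<le> real_of_int s" "real m - 1 \<le> 2 * real_of_int s" by auto
    hence "K \<le> s" "M - 1 \<le> 2 * s" unfolding K_def M_def by linarith+
    thus ?thesis by (simp add: s_def)
  qed
  define st where "st n = (stp K M a ^^ n) ([], [])" for n
  have st_Suc: "st (Suc n) = stp K M a (st n)" for n by (simp add: st_def)
  have Inv0: "Inv K M a ([], [])"
    using hyp KM by (auto simp: Inv_def EE_def R1_def R2_def)
  have Inv: "Inv K M a (st n)" for n
  proof (induction n)
    case 0 thus ?case using Inv0 by (simp add: st_def)
  next
    case (Suc n)
    show ?case
    proof (cases "EE a (st n) = 0")
      case True thus ?thesis using Suc by (simp add: st_Suc stp_def)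
    next
      case False thus ?thesis using step[OF K1 KM Suc False] by (simp add: st_Suc)
    qed
  qed
  show ?thesis
  proof (cases "\<exists>n. EE a (st n) = 0")
    case True
    then obtain n where n: "EE a (st n) = 0" by blast
    define as1 where "as1 = fst (st n)"
    define as2 where "as2 = snd (st n)"
    have v1: "valid K as1" and v2: "valid M as2" using Inv[of n] by (auto simp: Inv_def as1_def as2_def)
    have g1: "ge (ev as1) 1" using v1 K1 valid_mono ev_props by blast
    have g2: "ge (ev as2) 1" using v2 K1 KM valid_mono ev_props by (meson order_trans)
    have f1: "ev as1 + (\<alpha> - a) \<in> cfS k"
      using member[OF assms(1) g1 Pa] ev_all[of k as1] v1 assms(1) by (simp add: K_def)
    moreover have f2: "ev as2 \<in> cfS m"
      using member[OF _ g2, of m 0] ev_all[of m as2] v2 assms by (simp add: M_def)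
    moreover have f3: "\<alpha> = (ev as1 + (\<alpha> - a)) + ev as2"
    proof -
      have "a - ev as1 - ev as2 = 0" using n by (simp add: EE_def as1_def as2_def)
      hence "a = ev as1 + ev as2" by (metis add.commute diff_diff_eq eq_iff_diff_eq_0)
      thus ?thesis by (simp add: algebra_simps)
    qed
    show ?thesis by (intro exI[of _ "ev as1 + (\<alpha> - a)"] exI[of _ "ev as2"] conjI f1 f2 f3)
  next
    case False
    hence E0: "EE a (st n) \<noteq> 0" for n by blast
    note S = step[OF K1 KM Inv E0, unfolded st_Suc[symmetric]]
    define c1 where "c1 n = ev (fst (st n))" for n
    define c2 where "c2 n = ev (snd (st n))" for n
    define r1 where "r1 n = R1 K (st n)" for n
    define r2 where "r2 n = R2 M (st n)" for n
    define l1 where "l1 n = length (fst (st n))" for n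
    define l2 where "l2 n = length (snd (st n))" for n
    have sr1: "r1 n \<le> r1 (Suc n)" for n using S[of n] unfolding r1_def by simp
    have sr2: "r2 n \<le> r2 (Suc n)" for n using S[of n] unfolding r2_def by simp
    have sl1: "l1 n \<le> l1 (Suc n)" for n using S[of n] unfolding l1_def by simp
    have sl2: "l2 n \<le> l2 (Suc n)" for n using S[of n] unfolding l2_def by simp
    have mr1: "mono r1" unfolding mono_iff_le_Suc using sr1 by blast
    have mr2: "mono r2" unfolding mono_iff_le_Suc using sr2 by blast
    have ml1: "mono l1" unfolding mono_iff_le_Suc using sl1 by blast
    have ml2: "mono l2" unfolding mono_iff_le_Suc using sl2 by blast
    have gc1: "ge (c1 (Suc n) - c1 n) (r1 n)" for n using S[of n] by (simp add: c1_def r1_def)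
    have gc2: "ge (c2 (Suc n) - c2 n) (r2 n)" for n using S[of n] by (simp add: c2_def r2_def)
    have v1: "valid K (fst (st n))" and v2: "valid M (snd (st n))" for n
      using Inv[of n] by (auto simp: Inv_def)
    have v11: "valid 1 (fst (st n))" for n using valid_mono[OF v1[of n] K1] .
    have v21: "valid 1 (snd (st n))" for n using valid_mono[OF v2[of n]] K1 KM by simp
    have c1f: "ge (c1 n) 1" for n using ev_props[OF v11[of n]] unfolding c1_def .
    have c2f: "ge (c2 n) 1" for n using ev_props[OF v21[of n]] unfolding c2_def .
    have r1l: "2 * int (l1 n) + K \<le> r1 n" for n
    proof -
      have "K * int (l1 n) \<le> Dsum (fst (st n))" using Dsum_ge[OF v1[of n]] K1 by (simp add: l1_def)
      moreover have "1 * int (l1 n) \<le> K * int (l1 n)" using mult_right_mono[OF K1, of "int (l1 n)"] by simp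
      ultimately show ?thesis unfolding r1_def R1_def by linarith
    qed
    have r2l: "2 * int (l2 n) + M \<le> r2 n" for n
    proof -
      have "M * int (l2 n) \<le> Dsum (snd (st n))" using Dsum_ge[OF v2[of n]] K1 KM by (simp add: l2_def)
      moreover have "1 * int (l2 n) \<le> M * int (l2 n)" using mult_right_mono[of 1 M "int (l2 n)"] K1 KM by simp
      ultimately show ?thesis unfolding r2_def R2_def by linarith
    qed
    have A: "\<exists>n'\<ge>n. r1 n' \<le> r2 n'" for n
    proof (rule ccontr)
      assume "\<not> ?thesis"
      hence lt: "\<forall>n'\<ge>n. r2 n' < r1 n'" by force
      have "r1 (n + j) = r1 n \<and> r2 n + 2 * int j \<le> r2 (n + j)" for j
      proof (induction j)
        case 0 thus ?case by simp
      next
        case (Suc j)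
        have "r2 (n + j) < r1 (n + j)" using lt by simp
        hence "R2 M (st (n + j)) < R1 K (st (n + j))" by (simp add: r1_def r2_def)
        hence "R2 M (st (Suc (n + j))) \<ge> R2 M (st (n + j)) + 2 \<and> fst (st (Suc (n + j))) = fst (st (n + j))"
          using S[of "n + j"] by simp
        thus ?case using Suc unfolding r1_def r2_def R1_def by simp
      qed
      note X = this[of "nat (r1 n - r2 n)"]
      have "r2 (n + nat (r1 n - r2 n)) < r1 (n + nat (r1 n - r2 n))" using lt by simp
      thus False using conjunct1[OF X] conjunct2[OF X] by linarith
    qed
    have B: "\<exists>n'\<ge>n. r2 n' < r1 n'" for n
    proof (rule ccontr)
      assume "\<not> ?thesis"
      hence le: "\<forall>n'\<ge>n. r1 n' \<le> r2 n'" by force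
      have XX: "r2 (n + j) = r2 n \<and> r1 n + 2 * int j \<le> r1 (n + j)" for j
      proof (induction j)
        case 0 thus ?case by simp
      next
        case (Suc j)
        have "r1 (n + j) \<le> r2 (n + j)" using le by simp
        hence "R1 K (st (n + j)) \<le> R2 M (st (n + j))" by (simp add: r1_def r2_def)
        hence "R1 K (st (Suc (n + j))) \<ge> R1 K (st (n + j)) + 2 \<and> snd (st (Suc (n + j))) = snd (st (n + j))"
          using S[of "n + j"] by simp
        thus ?case using Suc unfolding r1_def r2_def R2_def by simp
      qed
      define jj where "jj = nat (r2 n - r1 n) + 1"
      note X = XX[of jj]
      have rr: "r1 n \<le> r2 n" using le by simp
      have ij: "int jj = r2 n - r1 n + 1" using rr by (simp add: jj_def)
      have a1: "r1 (n + jj) \<le> r2 (n + jj)" using le by simp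
      have a2: "r2 (n + jj) = r2 n" using X by simp
      have a3: "r1 n + 2 * int jj \<le> r1 (n + jj)" using X by simp
      show False using a1 a2 a3 ij rr by linarith
    qed
    have L1: "\<exists>n. N \<le> l1 n" for N
    proof (induction N)
      case 0 thus ?case by simp
    next
      case (Suc N)
      then obtain n where n: "N \<le> l1 n" by blast
      obtain n' where n': "n' \<ge> n" "r1 n' \<le> r2 n'" using A by blast
      have "l1 (Suc n') = Suc (l1 n')" using S[of n'] n'(2) by (simp add: l1_def r1_def r2_def)
      moreover have "l1 n \<le> l1 n'" using ml1 n'(1) by (simp add: monoD)
      ultimately show ?case using n by (intro exI[of _ "Suc n'"]) simp
    qed
    have L2: "\<exists>n. N \<le> l2 n" for N
    proof (induction N)
      case 0 thus ?case by simp
    next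
      case (Suc N)
      then obtain n where n: "N \<le> l2 n" by blast
      obtain n' where n': "n' \<ge> n" "r2 n' < r1 n'" using B by blast
      have "l2 (Suc n') = Suc (l2 n')" using S[of n'] n'(2) by (simp add: l2_def r1_def r2_def)
      moreover have "l2 n \<le> l2 n'" using ml2 n'(1) by (simp add: monoD)
      ultimately show ?case using n by (intro exI[of _ "Suc n'"]) simp
    qed
    have u1: "\<exists>n. j < r1 n" for j
    proof -
      obtain n where "nat j \<le> l1 n" using L1 by blast
      thus ?thesis using r1l[of n] K1 by (intro exI[of _ n]) linarith
    qed
    have u2: "\<exists>n. j < r2 n" for j
    proof -
      obtain n where "nat j \<le> l2 n" using L2 by blast
      thus ?thesis using r2l[of n] K1 KM by (intro exI[of _ n]) linarith
    qed
    obtain B1 where B1: "ge B1 1" "\<forall>n. ge (B1 - c1 n) (r1 n)"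
      using limit[of c1 r1] c1f mr1 gc1 u1 by blast
    obtain B2 where B2: "ge B2 1" "\<forall>n. ge (B2 - c2 n) (r2 n)"
      using limit[of c2 r2] c2f mr2 gc2 u2 by blast
    have sum: "a = B1 + B2"
    proof (intro fls_eqI)
      fix j
      obtain n1 where n1: "j < r1 n1" using u1 by blast
      obtain n2 where n2: "j < r2 n2" using u2 by blast
      define n where "n = max n1 n2"
      have "j < r1 n" using n1 monoD[OF mr1, of n1 n] by (simp add: n_def)
      moreover have "j < r2 n" using n2 monoD[OF mr2, of n2 n] by (simp add: n_def)
      moreover have "min (r1 n) (r2 n) \<le> fls_subdegree (EE a (st n))"
        using Inv[of n] E0[of n] by (simp add: Inv_def r1_def r2_def)
      ultimately have gE: "ge (EE a (st n)) (j + 1)" using E0[of n] ge_iff by fastforce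
      have g1: "ge (B1 - c1 n) (j + 1)" using ge_mono[of "B1 - c1 n" "r1 n" "j + 1"] B1(2) \<open>j < r1 n\<close> by simp
      have g2: "ge (B2 - c2 n) (j + 1)" using ge_mono[of "B2 - c2 n" "r2 n" "j + 1"] B2(2) \<open>j < r2 n\<close> by simp
      have "a - B1 - B2 = EE a (st n) - (B1 - c1 n) - (B2 - c2 n)"
        by (simp add: EE_def c1_def c2_def)
      hence "ge (a - B1 - B2) (j + 1)" using gE g1 g2 ge_diff by metis
      hence "fls_nth (a - B1 - B2) j = 0" by (simp add: ge_def)
      thus "fls_nth a j = fls_nth (B1 + B2) j" by (simp add: algebra_simps)
    qed
    have all1: "\<forall>j. (T ^^ j) B1 = 0 \<or> int k \<le> fls_subdegree ((T ^^ j) B1)"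
    proof
      fix j
      obtain n where n: "j \<le> l1 n" using L1 by blast
      have "ge (B1 - c1 n) (r1 n)" using B1 by blast
      hence "B1 = ev (fst (st n)) \<or> (B1 \<noteq> ev (fst (st n)) \<and>
          fls_subdegree (B1 - ev (fst (st n))) \<ge> 2 * Dsum (fst (st n)) + K)"
        unfolding ge_iff c1_def r1_def R1_def by auto
      thus "(T ^^ j) B1 = 0 \<or> int k \<le> fls_subdegree ((T ^^ j) B1)"
        using Cyl[OF v1[of n] K1, of B1 j] n by (simp add: l1_def K_def)
    qed
    have all2: "\<forall>j. (T ^^ j) B2 = 0 \<or> int m \<le> fls_subdegree ((T ^^ j) B2)"
    proof
      fix j
      obtain n where n: "j \<le> l2 n" using L2 by blast
      have "ge (B2 - c2 n) (r2 n)" using B2 by blast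
      hence "B2 = ev (snd (st n)) \<or> (B2 \<noteq> ev (snd (st n)) \<and>
          fls_subdegree (B2 - ev (snd (st n))) \<ge> 2 * Dsum (snd (st n)) + M)"
        unfolding ge_iff c2_def r2_def R2_def by auto
      thus "(T ^^ j) B2 = 0 \<or> int m \<le> fls_subdegree ((T ^^ j) B2)"
        using Cyl[OF v2[of n], of B2 j] n K1 KM by (simp add: l2_def M_def)
    qed
    have f1: "B1 + (\<alpha> - a) \<in> cfS k" using member[OF assms(1) B1(1) Pa all1] .
    moreover have f2: "B2 \<in> cfS m" using member[OF _ B2(1) _ all2, of 0] assms by simp
    moreover have f3: "\<alpha> = (B1 + (\<alpha> - a)) + B2" using sum by simp
    show ?thesis by (intro exI[of _ "B1 + (\<alpha> - a)"] exI[of _ "B2"] conjI f1 f2 f3)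
  qed
qed

end
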